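(* Let $\mathbf P=(P,\leq,0,1)$ be a bounded poset which is the horizontal sum of bounded posets $\mathbf P_{\alpha}=(P_{\alpha},\leq_{\alpha},0,1)$, $\alpha\in\Lambda$. Then the Dedekind-MacNeille completion $\mathrm{DM}(\mathbf P)$ is order-isomorphic to the horizontal sum of the complete lattices $\mathrm{DM}(\mathbf P_{\alpha})$, $\alpha\in\Lambda$.
   Context: The horizontal sum of a family of bounded posets is obtained from their disjoint union by identifying all the bottom elements into a single element $0$ and all the top elements into a single element $1$; two elements are comparable only if one of them is $0$ or $1$ or both lie in the same summand and are comparable there. For a poset $\mathbf P$ and $M\subseteq P$, $U(M)$ and $L(M)$ denote the sets of upper and lower bounds of $M$. The Dedekind-MacNeille completion $\mathrm{DM}(\mathbf P)$ is the complete lattice $(\{B\subseteq P\mid L(U(B))=B\},\subseteq)$, into which $P$ embeds via $x\mapsto L(\{x\})$. *)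

theory Defs
  imports Main
begin

definition bounded_poset :: "'a set \<Rightarrow> ('a \<Rightarrow> 'a \<Rightarrow> bool) \<Rightarrow> 'a \<Rightarrow> 'a \<Rightarrow> bool" where
  "bounded_poset A le zero one \<longleftrightarrow>
     (\<forall>x\<in>A. le x x) \<and>
     (\<forall>x\<in>A. \<forall>y\<in>A. le x y \<and> le y x \<longrightarrow> x = y) \<and>
     (\<forall>x\<in>A. \<forall>y\<in>A. \<forall>z\<in>A. le x y \<and> le y z \<longrightarrow> le x z) \<and>
     zero \<in> A \<and> one \<in> A \<and> (\<forall>x\<in>A. le zero x \<and> le x one)"

definition Ub :: "'a set \<Rightarrow> ('a \<Rightarrow> 'a \<Rightarrow> bool) \<Rightarrow> 'a set \<Rightarrow> 'a set" where
  "Ub A le M = {y\<in>A. \<forall>x\<in>M. le x y}"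

definition Lb :: "'a set \<Rightarrow> ('a \<Rightarrow> 'a \<Rightarrow> bool) \<Rightarrow> 'a set \<Rightarrow> 'a set" where
  "Lb A le M = {y\<in>A. \<forall>x\<in>M. le y x}"

definition DM :: "'a set \<Rightarrow> ('a \<Rightarrow> 'a \<Rightarrow> bool) \<Rightarrow> 'a set set" where
  "DM A le = {B. B \<subseteq> A \<and> Lb A le (Ub A le B) = B}"

text \<open>Horizontal sum of a family of bounded posets (Q \<alpha>, le \<alpha>, zero \<alpha>, one \<alpha>), \<alpha> \<in> I:
  disjoint union of the summands with all bottoms identified to HBot and all tops to HTop.\<close>

datatype 'x hs = HBot | HTop | HEl 'x

definition hsum_carrier :: "'i set \<Rightarrow> ('i \<Rightarrow> 'b set) \<Rightarrow> ('i \<Rightarrow> 'b) \<Rightarrow> ('i \<Rightarrow> 'b)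
    \<Rightarrow> ('i \<times> 'b) hs set" where
  "hsum_carrier I Q zero one =
     {HBot, HTop} \<union> {HEl (\<alpha>, x) | \<alpha> x. \<alpha> \<in> I \<and> x \<in> Q \<alpha> \<and> x \<noteq> zero \<alpha> \<and> x \<noteq> one \<alpha>}"

fun hsum_le :: "('i \<Rightarrow> 'b \<Rightarrow> 'b \<Rightarrow> bool) \<Rightarrow> ('i \<times> 'b) hs \<Rightarrow> ('i \<times> 'b) hs \<Rightarrow> bool" where
  "hsum_le le HBot y = True"
| "hsum_le le x HTop = True"
| "hsum_le le (HEl (\<alpha>, x)) (HEl (\<beta>, y)) = (\<alpha> = \<beta> \<and> le \<alpha> x y)"
| "hsum_le le _ _ = False"

definition order_iso :: "'a set \<Rightarrow> ('a \<Rightarrow> 'a \<Rightarrow> bool) \<Rightarrow> 'b set \<Rightarrow> ('b \<Rightarrow> 'b \<Rightarrow> bool)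
    \<Rightarrow> ('a \<Rightarrow> 'b) \<Rightarrow> bool" where
  "order_iso A leA B leB f \<longleftrightarrow>
     bij_betw f A B \<and> (\<forall>x\<in>A. \<forall>y\<in>A. leA x y \<longleftrightarrow> leB (f x) (f y))"

end

theory Submission
  imports Defs
begin

locale hsctx =
  fixes I :: "'i set" and P :: "'i \<Rightarrow> 'a set" and le :: "'i \<Rightarrow> 'a \<Rightarrow> 'a \<Rightarrow> bool"
    and zero one :: "'i \<Rightarrow> 'a"
  assumes bp: "\<And>a. a \<in> I \<Longrightarrow> bounded_poset (P a) (le a) (zero a) (one a)"
begin

abbreviation "H \<equiv> hsum_carrier I P zero one"
abbreviation "hl \<equiv> hsum_le le"

lemma refl': "a \<in> I \<Longrightarrow> x \<in> P a \<Longrightarrow> le a x x" using bp unfolding bounded_poset_def by blast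
lemma antisym': "a \<in> I \<Longrightarrow> x \<in> P a \<Longrightarrow> y \<in> P a \<Longrightarrow> le a x y \<Longrightarrow> le a y x \<Longrightarrow> x = y"
  using bp unfolding bounded_poset_def by blast
lemma trans': "a \<in> I \<Longrightarrow> x \<in> P a \<Longrightarrow> y \<in> P a \<Longrightarrow> z \<in> P a \<Longrightarrow> le a x y \<Longrightarrow> le a y z \<Longrightarrow> le a x z"
  using bp unfolding bounded_poset_def by blast
lemma zero_in: "a \<in> I \<Longrightarrow> zero a \<in> P a" using bp unfolding bounded_poset_def by blast
lemma one_in: "a \<in> I \<Longrightarrow> one a \<in> P a" using bp unfolding bounded_poset_def by blast
lemma zero_le: "a \<in> I \<Longrightarrow> x \<in> P a \<Longrightarrow> le a (zero a) x" using bp unfolding bounded_poset_def by blast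
lemma le_one: "a \<in> I \<Longrightarrow> x \<in> P a \<Longrightarrow> le a x (one a)" using bp unfolding bounded_poset_def by blast

lemma memH: "HEl (a,x) \<in> H \<longleftrightarrow> a \<in> I \<and> x \<in> P a \<and> x \<noteq> zero a \<and> x \<noteq> one a"
  "HBot \<in> H" "HTop \<in> H"
  by (auto simp: hsum_carrier_def)

lemma hl_simps[simp]: "hl (HEl p) HBot = False" "hl HTop HBot = False" "hl HTop (HEl p) = False"
  by (cases p; simp)+

lemma hl_top[simp]: "hl x HTop" by (cases x) auto

lemma hl_top_iff: "hl HTop u \<longleftrightarrow> u = HTop" by (cases u) auto
lemma hl_bot_iff: "hl u HBot \<longleftrightarrow> u = HBot" by (cases u) auto

lemma dm_sub: "B \<in> DM H hl \<Longrightarrow> B \<subseteq> H" by (simp add: DM_def)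

lemma dm_eq: "B \<in> DM H hl \<Longrightarrow> Lb H hl (Ub H hl B) = B" by (simp add: DM_def)

lemma dm_bot: "B \<in> DM H hl \<Longrightarrow> HBot \<in> B"
proof -
  assume "B \<in> DM H hl"
  then have "Lb H hl (Ub H hl B) = B" by (rule dm_eq)
  moreover have "HBot \<in> Lb H hl (Ub H hl B)" by (simp add: Lb_def memH)
  ultimately show ?thesis by simp
qed

lemma Lb_top: "Ub H hl B \<subseteq> {HTop} \<Longrightarrow> Lb H hl (Ub H hl B) = H"
proof -
  assume a: "Ub H hl B \<subseteq> {HTop}"
  have "hl x u" if "u \<in> Ub H hl B" for x u
  proof -
    have "u = HTop" using a that by blast
    then show ?thesis by simp
  qed
  then show ?thesis unfolding Lb_def by blast
qed

lemma dm_top: "B \<in> DM H hl \<Longrightarrow> HTop \<in> B \<Longrightarrow> B = H"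
proof -
  assume B: "B \<in> DM H hl" "HTop \<in> B"
  have "Ub H hl B \<subseteq> {HTop}" using B(2) by (auto simp: Ub_def hl_top_iff)
  then show ?thesis using dm_eq[OF B(1)] Lb_top by simp
qed

lemma dm_tag: "B \<in> DM H hl \<Longrightarrow> HTop \<notin> B \<Longrightarrow> HEl (a,x) \<in> B \<Longrightarrow> HEl (b,y) \<in> B \<Longrightarrow> a = b"
proof (rule ccontr)
  assume B: "B \<in> DM H hl" "HTop \<notin> B" "HEl (a,x) \<in> B" "HEl (b,y) \<in> B" "a \<noteq> b"
  have "Ub H hl B \<subseteq> {HTop}"
  proof
    fix u assume u: "u \<in> Ub H hl B"
    then have "hl (HEl (a,x)) u" "hl (HEl (b,y)) u" using B by (auto simp: Ub_def)
    then show "u \<in> {HTop}" using B(5) by (cases u) auto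
  qed
  then have "B = H" using dm_eq[OF B(1)] Lb_top by simp
  then show False using B(2) memH by simp
qed

definition "Cof a B = insert (zero a) {x. HEl (a,x) \<in> B}"

lemma dm_C:
  assumes B: "B \<in> DM H hl" "HTop \<notin> B" "HEl (a,x) \<in> B"
  shows "Cof a B \<in> DM (P a) (le a)" "Cof a B \<noteq> {zero a}" "Cof a B \<noteq> P a" "a \<in> I"
proof -
  have sub: "B \<subseteq> H" using dm_sub[OF B(1)] .
  then have xH: "HEl (a,x) \<in> H" using B(3) by blast
  then show aI: "a \<in> I" by (simp add: memH)
  have x: "x \<in> P a" "x \<noteq> zero a" "x \<noteq> one a" using xH by (auto simp: memH)
  have CP: "Cof a B \<subseteq> P a" using sub aI zero_in by (auto simp: Cof_def memH)
  have one_notin: "one a \<notin> Cof a B"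
  proof
    assume "one a \<in> Cof a B"
    then have "one a = zero a \<or> HEl (a, one a) \<in> B" by (simp add: Cof_def)
    then show False
    proof
      assume "one a = zero a"
      then show False using x aI antisym' zero_le le_one zero_in by metis
    next
      assume "HEl (a, one a) \<in> B" then show False using sub by (auto simp: memH)
    qed
  qed
  then show "Cof a B \<noteq> P a" using one_in[OF aI] by blast
  show "Cof a B \<noteq> {zero a}" using B(3) x by (auto simp: Cof_def)
  have "Lb (P a) (le a) (Ub (P a) (le a) (Cof a B)) \<subseteq> Cof a B"
  proof
    fix z assume z: "z \<in> Lb (P a) (le a) (Ub (P a) (le a) (Cof a B))"
    then have zP: "z \<in> P a" and zle: "\<And>u. u \<in> Ub (P a) (le a) (Cof a B) \<Longrightarrow> le a z u"
      by (auto simp: Lb_def)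
    have UB: "y \<in> Ub (P a) (le a) (Cof a B)" if "HEl (a,y) \<in> Ub H hl B" for y
    proof -
      have yP: "y \<in> P a" using that by (auto simp: Ub_def memH)
      have "le a w y" if "w \<in> Cof a B" for w
      proof (cases "w = zero a")
        case True then show ?thesis using zero_le aI yP by simp
      next
        case False
        then have "HEl (a,w) \<in> B" using that by (simp add: Cof_def)
        then show ?thesis using \<open>HEl (a,y) \<in> Ub H hl B\<close> by (auto simp: Ub_def)
      qed
      then show ?thesis using yP by (auto simp: Ub_def)
    qed
    show "z \<in> Cof a B"
    proof (cases "z = zero a")
      case True then show ?thesis by (simp add: Cof_def)
    next
      case znz: False
      show ?thesis
      proof (cases "z = one a")
        case True
        have "Ub H hl B \<subseteq> {HTop}"
        proof
          fix u assume u: "u \<in> Ub H hl B"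
          show "u \<in> {HTop}"
          proof (cases u)
            case HBot then show ?thesis using u B(3) by (auto simp: Ub_def)
          next
            case HTop then show ?thesis by simp
          next
            case (HEl p)
            then obtain b y where p: "u = HEl (b,y)" by (cases p) auto
            have "hl (HEl (a,x)) u" using u B(3) by (auto simp: Ub_def)
            then have "b = a" using p by simp
            then have "y \<in> Ub (P a) (le a) (Cof a B)" using UB u p by simp
            then have "le a (one a) y" using zle True by simp
            moreover have "y \<in> P a" "y \<noteq> one a" using u p \<open>b = a\<close> by (auto simp: Ub_def memH)
            ultimately show ?thesis using antisym' le_one aI one_in by metis
          qed
        qed
        then have "B = H" using dm_eq[OF B(1)] Lb_top by simp
        then show ?thesis using B(2) memH by simp
      next
        case znt: False
        have "HEl (a,z) \<in> Lb H hl (Ub H hl B)"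
        proof -
          have "hl (HEl (a,z)) u" if u: "u \<in> Ub H hl B" for u
          proof (cases u)
            case HBot then show ?thesis using u B(3) by (auto simp: Ub_def)
          next
            case HTop then show ?thesis by simp
          next
            case (HEl p)
            then obtain b y where p: "u = HEl (b,y)" by (cases p) auto
            have "hl (HEl (a,x)) u" using u B(3) by (auto simp: Ub_def)
            then have "b = a" using p by simp
            then have "y \<in> Ub (P a) (le a) (Cof a B)" using UB u p by simp
            then show ?thesis using zle p \<open>b = a\<close> by simp
          qed
          moreover have "HEl (a,z) \<in> H" using aI zP znz znt by (simp add: memH)
          ultimately show ?thesis by (auto simp: Lb_def)
        qed
        then have "HEl (a,z) \<in> B" using dm_eq[OF B(1)] by simp
        then show ?thesis by (simp add: Cof_def)
      qed
    qed
  qed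
  moreover have "Cof a B \<subseteq> Lb (P a) (le a) (Ub (P a) (le a) (Cof a B))"
    using CP by (auto simp: Lb_def Ub_def)
  ultimately show "Cof a B \<in> DM (P a) (le a)" using CP by (auto simp: DM_def)
qed


definition "tagof B = (SOME a. \<exists>x. HEl (a,x) \<in> B)"

lemma tagof: "B \<in> DM H hl \<Longrightarrow> HTop \<notin> B \<Longrightarrow> HEl (a,x) \<in> B \<Longrightarrow> tagof B = a"
proof -
  assume B: "B \<in> DM H hl" "HTop \<notin> B" "HEl (a,x) \<in> B"
  have "\<exists>y. HEl (tagof B, y) \<in> B" unfolding tagof_def by (rule someI_ex) (use B in blast)
  then obtain y where "HEl (tagof B, y) \<in> B" by blast
  then show ?thesis using dm_tag[OF B(1,2)] B(3) by blast
qed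

definition "F B = (if HTop \<in> B then HTop else if (\<exists>a x. HEl (a,x) \<in> B)
   then HEl (tagof B, Cof (tagof B) B) else HBot)"

abbreviation "T \<equiv> hsum_carrier I (\<lambda>a. DM (P a) (le a)) (\<lambda>a. {zero a}) P"
abbreviation "tle \<equiv> hsum_le (\<lambda>a. (\<subseteq>)) :: ('i \<times> 'a set) hs \<Rightarrow> _"

lemma F_el: "B \<in> DM H hl \<Longrightarrow> HTop \<notin> B \<Longrightarrow> HEl (a,x) \<in> B \<Longrightarrow> F B = HEl (a, Cof a B)"
  using tagof unfolding F_def by auto

lemma F_nohel: "B \<in> DM H hl \<Longrightarrow> HTop \<notin> B \<Longrightarrow> \<forall>a x. HEl (a,x) \<notin> B \<Longrightarrow> F B = HBot \<and> B = {HBot}"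
proof -
  assume B: "B \<in> DM H hl" "HTop \<notin> B" "\<forall>a x. HEl (a,x) \<notin> B"
  have "B \<subseteq> {HBot}"
  proof
    fix u assume "u \<in> B" then show "u \<in> {HBot}" using B by (cases u) auto
  qed
  then show ?thesis using dm_bot[OF B(1)] B unfolding F_def by auto
qed

lemma F_in: "B \<in> DM H hl \<Longrightarrow> F B \<in> T"
proof -
  assume B: "B \<in> DM H hl"
  show ?thesis
  proof (cases "HTop \<in> B")
    case True then show ?thesis by (simp add: F_def hsum_carrier_def)
  next
    case False
    show ?thesis
    proof (cases "\<exists>a x. HEl (a,x) \<in> B")
      case True
      then obtain a x where ax: "HEl (a,x) \<in> B" by blast
      show ?thesis using F_el[OF B False ax] dm_C[OF B False ax] by (auto simp: hsum_carrier_def)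
    next
      case nf: False
      then show ?thesis using F_nohel[OF B False] by (auto simp: hsum_carrier_def)
    qed
  qed
qed

lemma F_ord: "B1 \<in> DM H hl \<Longrightarrow> B2 \<in> DM H hl \<Longrightarrow> B1 \<subseteq> B2 \<longleftrightarrow> tle (F B1) (F B2)"
proof -
  assume B1: "B1 \<in> DM H hl" and B2: "B2 \<in> DM H hl"
  show ?thesis
  proof (cases "HTop \<in> B2")
    case True
    then show ?thesis using dm_top[OF B2] dm_sub[OF B1] by (simp add: F_def)
  next
    case n2: False
    show ?thesis
    proof (cases "HTop \<in> B1")
      case True
      then have "F B1 = HTop" by (simp add: F_def)
      moreover have "F B2 \<noteq> HTop" using n2 by (simp add: F_def)
      ultimately show ?thesis using True n2 by (cases "F B2") auto
    next
      case n1: False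
      show ?thesis
      proof (cases "\<exists>a x. HEl (a,x) \<in> B1")
        case False
        then show ?thesis using F_nohel[OF B1 n1] dm_bot[OF B2] by auto
      next
        case True
        then obtain a x where ax: "HEl (a,x) \<in> B1" by blast
        have f1: "F B1 = HEl (a, Cof a B1)" using F_el[OF B1 n1 ax] .
        show ?thesis
        proof (cases "\<exists>a x. HEl (a,x) \<in> B2")
          case False
          then show ?thesis using F_nohel[OF B2 n2] f1 ax by auto
        next
          case True
          then obtain b y where hby: "HEl (b,y) \<in> B2" by blast
          have f2: "F B2 = HEl (b, Cof b B2)" using F_el[OF B2 n2 hby] .
          show ?thesis
          proof
            assume "B1 \<subseteq> B2"
            then have "a = b" using ax dm_tag[OF B2 n2 _ hby] by blast
            then show "tle (F B1) (F B2)" using f1 f2 \<open>B1 \<subseteq> B2\<close> by (auto simp: Cof_def)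
          next
            assume "tle (F B1) (F B2)"
            then have ab: "a = b" and CC: "Cof a B1 \<subseteq> Cof b B2" using f1 f2 by auto
            show "B1 \<subseteq> B2"
            proof
              fix u assume u: "u \<in> B1"
              show "u \<in> B2"
              proof (cases u)
                case HBot then show ?thesis using dm_bot[OF B2] by simp
              next
                case HTop then show ?thesis using u n1 by simp
              next
                case (HEl p)
                then obtain c z where p: "u = HEl (c,z)" by (cases p) auto
                have "c = a" using dm_tag[OF B1 n1 ax] u p by simp
                have "z \<noteq> zero a" using dm_sub[OF B1] u p \<open>c = a\<close> by (auto simp: memH)
                have "z \<in> Cof a B1" using u p \<open>c = a\<close> by (simp add: Cof_def)
                then have "z \<in> Cof b B2" using CC by blast
                then show ?thesis using \<open>z \<noteq> zero a\<close> ab p \<open>c = a\<close> by (simp add: Cof_def)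
              qed
            qed
          qed
        qed
      qed
    qed
  qed
qed


lemma LU_sup: "B \<subseteq> A \<Longrightarrow> B \<subseteq> Lb A r (Ub A r B)" by (auto simp: Lb_def Ub_def)

lemma bot_DM: "{HBot} \<in> DM H hl"
proof -
  have "Lb H hl (Ub H hl {HBot}) \<subseteq> {HBot}"
  proof
    fix z assume "z \<in> Lb H hl (Ub H hl {HBot})"
    moreover have "HBot \<in> Ub H hl {HBot}" by (simp add: Ub_def memH)
    ultimately have "hl z HBot" by (auto simp: Lb_def)
    then show "z \<in> {HBot}" by (simp add: hl_bot_iff)
  qed
  then show ?thesis using LU_sup[of "{HBot}" H hl] memH by (auto simp: DM_def)
qed

lemma top_DM: "H \<in> DM H hl"
  using LU_sup[of H H hl] by (auto simp: DM_def Lb_def)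

lemma surjF:
  assumes t: "t \<in> T" shows "\<exists>B \<in> DM H hl. F B = t"
proof (cases t)
  case HBot
  then show ?thesis using bot_DM F_nohel[OF bot_DM] by auto
next
  case HTop
  then show ?thesis using top_DM memH by (auto simp: F_def)
next
  case (HEl p)
  then obtain a C where tC: "t = HEl (a,C)" by (cases p) auto
  then have aI: "a \<in> I" and CD: "C \<in> DM (P a) (le a)" and C0: "C \<noteq> {zero a}" and CP: "C \<noteq> P a"
    using t by (auto simp: hsum_carrier_def)
  have CsubP: "C \<subseteq> P a" and Ceq: "Lb (P a) (le a) (Ub (P a) (le a) C) = C" using CD by (auto simp: DM_def)
  have z0: "zero a \<in> C"
  proof -
    have "zero a \<in> Lb (P a) (le a) (Ub (P a) (le a) C)"
      using zero_in[OF aI] zero_le[OF aI] by (auto simp: Lb_def Ub_def)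
    then show ?thesis using Ceq by simp
  qed
  have ex_mid: "\<exists>y \<in> Ub (P a) (le a) C. y \<noteq> one a"
  proof (rule ccontr)
    assume "\<not> ?thesis"
    then have "\<forall>y \<in> Ub (P a) (le a) C. y = one a" by blast
    then have "P a \<subseteq> Lb (P a) (le a) (Ub (P a) (le a) C)" using le_one[OF aI] by (auto simp: Lb_def)
    then show False using Ceq CsubP CP by auto
  qed
  then obtain y0 where y0: "y0 \<in> Ub (P a) (le a) C" "y0 \<noteq> one a" by blast
  have one_notin: "one a \<notin> C"
  proof
    assume "one a \<in> C"
    then have "le a (one a) y0" using y0 by (auto simp: Ub_def)
    moreover have "y0 \<in> P a" using y0 by (auto simp: Ub_def)
    ultimately show False using y0(2) antisym' le_one aI one_in by metis
  qed
  obtain x where x: "x \<in> C" "x \<noteq> zero a" using C0 z0 by blast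
  have xP: "x \<in> P a" using x CsubP by blast
  have y0nz: "y0 \<noteq> zero a"
  proof
    assume "y0 = zero a"
    then have "le a x (zero a)" using y0 x by (auto simp: Ub_def)
    then show False using x xP antisym' zero_le aI zero_in by metis
  qed
  define B where "B = insert HBot {HEl (a,x) | x. x \<in> C \<and> x \<noteq> zero a}"
  have BH: "B \<subseteq> H" using CsubP one_notin aI by (auto simp: B_def memH)
  have xB: "HEl (a,x) \<in> B" using x by (auto simp: B_def)
  have y0U: "HEl (a,y0) \<in> Ub H hl B"
    using y0 y0nz aI by (auto simp: B_def Ub_def memH)
  have UBa: "u \<in> Ub (P a) (le a) C" if "HEl (a,u) \<in> Ub H hl B" for u
  proof -
    have uP: "u \<in> P a" using that by (auto simp: Ub_def memH)
    have "le a w u" if "w \<in> C" for w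
    proof (cases "w = zero a")
      case True then show ?thesis using zero_le aI uP by simp
    next
      case False
      then have "HEl (a,w) \<in> B" using that by (auto simp: B_def)
      then show ?thesis using \<open>HEl (a,u) \<in> Ub H hl B\<close> by (auto simp: Ub_def)
    qed
    then show ?thesis using uP by (auto simp: Ub_def)
  qed
  have "Lb H hl (Ub H hl B) \<subseteq> B"
  proof
    fix z assume z: "z \<in> Lb H hl (Ub H hl B)"
    then have zH: "z \<in> H" and zle: "\<And>u. u \<in> Ub H hl B \<Longrightarrow> hl z u" by (auto simp: Lb_def)
    show "z \<in> B"
    proof (cases z)
      case HBot then show ?thesis by (simp add: B_def)
    next
      case HTop
      then show ?thesis using zle[OF y0U] by simp
    next
      case (HEl q)
      then obtain b w where q: "z = HEl (b,w)" by (cases q) auto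
      have "b = a" using zle[OF y0U] q by simp
      have wP: "w \<in> P a" "w \<noteq> zero a" "w \<noteq> one a" using zH q \<open>b = a\<close> by (auto simp: memH)
      have "le a w v" if v: "v \<in> Ub (P a) (le a) C" for v
      proof -
        have vP: "v \<in> P a" using v by (auto simp: Ub_def)
        show ?thesis
        proof (cases "v = one a")
          case True then show ?thesis using le_one aI wP by simp
        next
          case False
          have "v \<noteq> zero a"
          proof
            assume "v = zero a"
            then have "le a x (zero a)" using v x by (auto simp: Ub_def)
            then show False using x xP antisym' zero_le aI zero_in by metis
          qed
          have "HEl (a,v) \<in> Ub H hl B"
          proof -
            have "hl u (HEl (a,v))" if "u \<in> B" for u
              using that v by (auto simp: B_def Ub_def)
            then show ?thesis using vP False \<open>v \<noteq> zero a\<close> aI by (auto simp: Ub_def memH)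
          qed
          then show ?thesis using zle q \<open>b = a\<close> by fastforce
        qed
      qed
      then have "w \<in> C" using wP Ceq by (auto simp: Lb_def)
      then show ?thesis using q \<open>b = a\<close> wP by (auto simp: B_def)
    qed
  qed
  then have BD: "B \<in> DM H hl" using BH LU_sup[OF BH] by (auto simp: DM_def)
  have nT: "HTop \<notin> B" by (auto simp: B_def)
  have "Cof a B = C" using z0 by (auto simp: Cof_def B_def)
  then have "F B = t" using F_el[OF BD nT xB] tC by simp
  then show ?thesis using BD by blast
qed

lemma tle_refl: "tle t t" by (cases t) auto

lemma main: "\<exists>f. order_iso (DM H hl) (\<subseteq>) T tle f"
proof -
  have inj: "inj_on F (DM H hl)"
  proof (rule inj_onI)
    fix x y assume "x \<in> DM H hl" "y \<in> DM H hl" "F x = F y"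
    then show "x = y" using F_ord tle_refl by (metis subset_antisym)
  qed
  have "F ` DM H hl = T" using F_in surjF by blast
  then have "order_iso (DM H hl) (\<subseteq>) T tle F"
    using inj F_ord by (auto simp: order_iso_def bij_betw_def)
  then show ?thesis by blast
qed

end

theorem proposition3:
  fixes I :: "'i set"
    and P :: "'i \<Rightarrow> 'a set"
    and le :: "'i \<Rightarrow> 'a \<Rightarrow> 'a \<Rightarrow> bool"
    and zero one :: "'i \<Rightarrow> 'a"
  assumes "\<And>\<alpha>. \<alpha> \<in> I \<Longrightarrow> bounded_poset (P \<alpha>) (le \<alpha>) (zero \<alpha>) (one \<alpha>)"
  shows "\<exists>f. order_iso
           (DM (hsum_carrier I P zero one) (hsum_le le)) (\<subseteq>)
           (hsum_carrier I (\<lambda>\<alpha>. DM (P \<alpha>) (le \<alpha>)) (\<lambda>\<alpha>. {zero \<alpha>}) P)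
           (hsum_le (\<lambda>\<alpha>. (\<subseteq>)))
           f"
proof -
  interpret hsctx I P le zero one using assms by unfold_locales
  show ?thesis by (rule main)
qed

end
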